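(* Let $m\ge 1$ and let $(\phi_n)_{n\ge 0}$ be vectors in $\mathbb{R}^m$ such that $A_n=\phi_n\phi_n^\top$ satisfies $0\le A_n\le I$ for all $n$. Define $\Phi(i,i)=I$ and $\Phi(n+1,i)=(I-A_n)\Phi(n,i)$ for $n\ge i$. Let $(\mu_j)_{j\ge 0}$ be nonnegative weights, and for $k<N$ let $S_{Nk}=\sum_{j=k}^{N-1}\mu_jA_j$ and $B_{jk}=\sum_{l=k}^{j-1}(\phi_j^\top\phi_l)^2$. Let $(t_k)_{k\ge 0}$ be a strictly increasing sequence of nonnegative integers (so $t_k\to\infty$). If $$\sum_{k=1}^\infty\frac{\lambda_{\min}(S_{t_kt_{k-1}})}{\left(\sqrt{\max_{t_{k-1}\le j<t_k}\mu_j}+\sqrt{\sum_{j=t_{k-1}}^{t_k-1}\mu_jB_{jt_{k-1}}}\right)^2}=\infty$$ (with all denominators nonzero), then $\Phi(n,0)\to 0$ as $n\to\infty$.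
   Context: $\lambda_{\min}$ denotes the smallest eigenvalue of a symmetric matrix; $0\le A\le I$ is in the Loewner order; convergence of matrices is in any norm. *)

theory Defs
  imports "HOL-Analysis.Analysis"
begin

definition outer :: "real^'m \<Rightarrow> real^'m^'m" where
  "outer v = (\<chi> i j. v $ i * v $ j)"

definition loewner_le :: "real^'m^'m \<Rightarrow> real^'m^'m \<Rightarrow> bool" where
  "loewner_le A B \<longleftrightarrow> (\<forall>x. x \<bullet> ((B - A) *v x) \<ge> 0)"

definition eigenvalues :: "real^'m^'m \<Rightarrow> real set" where
  "eigenvalues A = {l. \<exists>v. v \<noteq> 0 \<and> A *v v = l *\<^sub>R v}"

definition lambda_min :: "real^'m^'m \<Rightarrow> real" where
  "lambda_min A = Min (eigenvalues A)"

text \<open>Transition matrix: trans_mat A i k = Phi(i+k, i), i.e.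
  Phi(i,i) = I and Phi(n+1,i) = (I - A n) Phi(n,i).\<close>
fun trans_mat :: "(nat \<Rightarrow> real^'m^'m) \<Rightarrow> nat \<Rightarrow> nat \<Rightarrow> real^'m^'m" where
  "trans_mat A i 0 = mat 1"
| "trans_mat A i (Suc k) = (mat 1 - A (i + k)) ** trans_mat A i k"

definition Phi :: "(nat \<Rightarrow> real^'m^'m) \<Rightarrow> nat \<Rightarrow> nat \<Rightarrow> real^'m^'m" where
  "Phi A n i = trans_mat A i (n - i)"

end

theory Submission
  imports Defs
begin

lemma outer_mv: "outer v *v x = (v \<bullet> x) *\<^sub>R v"
  by (simp add: vec_eq_iff matrix_vector_mult_def outer_def inner_vec_def sum_distrib_left mult.assoc mult.commute mult.left_commute)

lemma sum_outer_mv: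
  "(\<Sum>j\<in>I. c j *\<^sub>R outer (f j)) *v x = (\<Sum>j\<in>I. (c j * (f j \<bullet> x)) *\<^sub>R f j)"
proof (induction I rule: infinite_finite_induct)
  case (insert a F)
  then show ?case
    by (simp add: matrix_vector_mult_add_rdistrib flip: scaleR_matrix_vector_assoc) (simp add: outer_mv)
qed auto

lemma quad_form:
  "y \<bullet> ((\<Sum>j\<in>I. c j *\<^sub>R outer (f j)) *v x) = (\<Sum>j\<in>I. c j * (f j \<bullet> x) * (f j \<bullet> y))"
  by (simp add: sum_outer_mv inner_sum_right inner_commute)

lemma norm_phi_le:
  assumes "loewner_le (outer p) (mat 1)"
  shows "p \<bullet> p \<le> 1"
proof -
  have "p \<bullet> ((mat 1 - outer p) *v p) \<ge> 0" using assms unfolding loewner_le_def by blast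
  hence "p \<bullet> p - (p \<bullet> p) * (p \<bullet> p) \<ge> 0"
    by (simp add: matrix_vector_mult_diff_rdistrib outer_mv inner_diff_right)
  hence "(p \<bullet> p) * (1 - p \<bullet> p) \<ge> 0" by (simp add: algebra_simps)
  moreover have "p \<bullet> p \<ge> 0" by simp
  ultimately show ?thesis
    by (metis diff_ge_0_iff_ge dual_order.trans zero_le_mult_iff inner_ge_zero le_less mult_eq_0_iff not_le zero_less_one_class.zero_le_one  order.refl)
qed

lemma step_le:
  assumes "p \<bullet> p \<le> 1"
  shows "norm ((mat 1 - outer p) *v y) ^ 2 \<le> norm y ^ 2 - (p \<bullet> y) ^ 2"
proof -
  have e: "(mat 1 - outer p) *v y = y - (p \<bullet> y) *\<^sub>R p"
    by (simp add: matrix_vector_mult_diff_rdistrib outer_mv)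
  have "norm (y - (p \<bullet> y) *\<^sub>R p) ^ 2 = y \<bullet> y - 2 * (p \<bullet> y)^2 + (p \<bullet> y)^2 * (p \<bullet> p)"
    unfolding power2_norm_eq_inner by (simp add: inner_diff_left inner_diff_right inner_commute power2_eq_square algebra_simps)
  also have "\<dots> \<le> y \<bullet> y - (p \<bullet> y)^2"
    using assms mult_left_mono[OF assms, of "(p \<bullet> y)^2"] by simp
  finally show ?thesis by (simp add: e power2_norm_eq_inner)
qed

lemma trans_mat_add: "trans_mat A i (a + b) = trans_mat A (i + a) b ** trans_mat A i a"
  by (induction b) (auto simp: matrix_mul_assoc add.assoc)

lemma aux_real:
  fixes a b :: real
  assumes "0 \<le> a^2 * (- b - 2) / (b + 1)^2" "b \<ge> 0"
  shows "a^2 \<le> 0"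
proof -
  have "(b+1)^2 > 0" using assms(2) by simp
  hence "0 \<le> a^2 * (- b - 2)" using assms(1) by (simp add: zero_le_divide_iff)
  moreover have "- b - 2 < 0" using assms(2) by simp
  ultimately show ?thesis by (simp add: mult_le_0_iff zero_le_mult_iff)
qed

lemma psd_null:
  fixes T :: "real^'m^'m"
  assumes sym: "\<And>x y. x \<bullet> (T *v y) = y \<bullet> (T *v x)"
    and psd: "\<And>x. x \<bullet> (T *v x) \<ge> 0" and v0: "v \<bullet> (T *v v) = 0"
  shows "T *v v = 0"
proof -
  let ?w = "T *v v"
  let ?a = "?w \<bullet> ?w" and ?b = "?w \<bullet> (T *v ?w)"
  have b0: "?b \<ge> 0" using psd by blast
  have expand: "(v + t *\<^sub>R ?w) \<bullet> (T *v (v + t *\<^sub>R ?w)) = 2 * t * ?a + t^2 * ?b" for t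
  proof -
    have "v \<bullet> (T *v ?w) = ?w \<bullet> ?w" using sym by simp
    thus ?thesis using v0
      by (simp add: matrix_vector_right_distrib matrix_vector_mult_scaleR inner_add_left inner_add_right power2_eq_square algebra_simps)
  qed
  define t where "t = - ?a / (?b + 1)"
  have "0 \<le> 2 * t * ?a + t^2 * ?b" using psd[of "v + t *\<^sub>R ?w"] expand by simp
  also have "\<dots> = ?a^2 * (- ?b - 2) / (?b + 1)^2"
  proof -
    have X: "2*(-a/(b+1))*a + (-a/(b+1))^2*b = a^2*(-b-2)/(b+1)^2" if "b \<ge> 0" for a b :: real
    proof -
      define c where "c = b + 1"
      have c: "c \<noteq> 0" using that by (simp add: c_def)
      have b: "b = c - 1" by (simp add: c_def)
      have "2*(-a/c)*a + (-a/c)^2*(c-1) = a^2*(-(c-1)-2)/c^2"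
        using c by (simp add: field_simps power2_eq_square)
      thus ?thesis unfolding b by (simp add: c_def)
    qed
    show ?thesis unfolding t_def by (rule X[OF b0])
  qed
  finally have "?a^2 * (- ?b - 2) / (?b + 1)^2 \<ge> 0" .
  hence "?a^2 \<le> 0" using b0 by (rule aux_real)
  hence "?a = 0" by simp
  thus ?thesis by simp
qed

lemma eigen_finite:
  fixes S :: "real^'m^'m"
  assumes sym: "\<And>x y. x \<bullet> (S *v y) = y \<bullet> (S *v x)"
  shows "finite (eigenvalues S)"
proof -
  define e where "e l = (SOME v. v \<noteq> 0 \<and> S *v v = l *\<^sub>R v)" for l
  have e: "e l \<noteq> 0 \<and> S *v e l = l *\<^sub>R e l" if "l \<in> eigenvalues S" for l
    using that unfolding eigenvalues_def e_def by (rule CollectE) (rule someI_ex)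
  have inj: "inj_on e (eigenvalues S)"
  proof (rule inj_onI)
    fix l1 l2 assume l: "l1 \<in> eigenvalues S" "l2 \<in> eigenvalues S" "e l1 = e l2"
    hence "l1 *\<^sub>R e l1 = l2 *\<^sub>R e l1" using e by metis
    thus "l1 = l2" using e[OF l(1)] by simp
  qed
  have orth: "pairwise orthogonal (e ` eigenvalues S)"
  proof (clarsimp simp: pairwise_def)
    fix l1 l2 assume l: "l1 \<in> eigenvalues S" "l2 \<in> eigenvalues S" "e l1 \<noteq> e l2"
    hence ne: "l1 \<noteq> l2" by auto
    have "l2 * (e l1 \<bullet> e l2) = e l1 \<bullet> (S *v e l2)" using e[OF l(2)] by simp
    also have "\<dots> = e l2 \<bullet> (S *v e l1)" by (rule sym)
    also have "\<dots> = l1 * (e l1 \<bullet> e l2)" using e[OF l(1)] by (simp add: inner_commute)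
    finally have "(l2 - l1) * (e l1 \<bullet> e l2) = 0" by (simp add: algebra_simps)
    thus "orthogonal (e l1) (e l2)" using ne by (simp add: orthogonal_def)
  qed
  have "0 \<notin> e ` eigenvalues S" using e by force
  hence "independent (e ` eigenvalues S)" using orth pairwise_orthogonal_independent by blast
  hence "finite (e ` eigenvalues S)" using independent_bound by blast
  thus ?thesis using inj finite_imageD by blast
qed

lemma rayleigh:
  fixes S :: "real^'m^'m"
  assumes sym: "\<And>x y. x \<bullet> (S *v y) = y \<bullet> (S *v x)"
  shows "lambda_min S * (x \<bullet> x) \<le> x \<bullet> (S *v x)"
proof -
  have cont: "continuous_on (sphere 0 1) (\<lambda>x::real^'m. x \<bullet> (S *v x))"
    by (intro continuous_intros linear_continuous_on matrix_vector_mul_linear bounded_linear_inner_right)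
  obtain u :: "real^'m" where "norm u = 1" using vector_choose_size[of 1] by auto
  hence ne: "sphere (0::real^'m) 1 \<noteq> {}" by auto
  obtain v where v: "v \<in> sphere 0 1" and vmin: "\<And>y. y \<in> sphere 0 1 \<Longrightarrow> v \<bullet> (S *v v) \<le> y \<bullet> (S *v y)"
    using continuous_attains_inf[OF compact_sphere ne cont] by blast
  define l where "l = v \<bullet> (S *v v)"
  have vv: "v \<bullet> v = 1" using v by (simp add: norm_eq_1)
  have q: "l * (y \<bullet> y) \<le> y \<bullet> (S *v y)" for y
  proof (cases "y = 0")
    case False
    let ?z = "(1 / norm y) *\<^sub>R y"
    have "?z \<in> sphere 0 1" using False by simp
    hence "l \<le> ?z \<bullet> (S *v ?z)" using vmin l_def by blast
    also have "\<dots> = (y \<bullet> (S *v y)) / (norm y)^2"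
      by (simp add: matrix_vector_mult_scaleR power2_eq_square)
    finally show ?thesis using False by (simp add: field_simps power2_norm_eq_inner)
  qed simp
  define T where "T = S - l *\<^sub>R mat 1"
  have Tv: "T *v x = S *v x - l *\<^sub>R x" for x
    by (simp add: T_def matrix_vector_mult_diff_rdistrib flip: scaleR_matrix_vector_assoc)
  have "T *v v = 0"
  proof (rule psd_null)
    show "x \<bullet> (T *v y) = y \<bullet> (T *v x)" for x y using sym[of x y] by (simp add: Tv inner_diff_right inner_commute)
    show "x \<bullet> (T *v x) \<ge> 0" for x using q[of x] by (simp add: Tv inner_diff_right)
    show "v \<bullet> (T *v v) = 0" using vv by (simp add: Tv inner_diff_right l_def)
  qed
  hence lin: "l \<in> eigenvalues S" using vv unfolding eigenvalues_def by (auto simp: Tv intro!: exI[of _ v])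
  have "\<forall>y\<in>eigenvalues S. l \<le> y"
  proof
    fix y assume "y \<in> eigenvalues S"
    then obtain w where w: "w \<noteq> 0" "S *v w = y *\<^sub>R w" unfolding eigenvalues_def by blast
    have "l * (w \<bullet> w) \<le> y * (w \<bullet> w)" using q[of w] w by simp
    thus "l \<le> y" using w by simp
  qed
  hence "lambda_min S = l" unfolding lambda_min_def using eigen_finite[OF sym] lin
    by (intro Min_eqI) auto
  thus ?thesis using q by simp
qed

lemma block:
  fixes phi :: "nat \<Rightarrow> real^'m" and mu :: "nat \<Rightarrow> real"
  assumes pn: "\<And>n. phi n \<bullet> phi n \<le> 1" and mu: "\<And>j. mu j \<ge> 0" and sN: "s < N"
  shows "x \<bullet> ((\<Sum>j = s..<N. mu j *\<^sub>R outer (phi j)) *v x) \<le>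
    (sqrt (Max (mu ` {s..<N})) + sqrt (\<Sum>j = s..<N. mu j * (\<Sum>l = s..<j. (phi j \<bullet> phi l)^2)))^2
     * (norm x ^ 2 - norm (trans_mat (\<lambda>n. outer (phi n)) s (N - s) *v x) ^ 2)"
proof -
  let ?A = "\<lambda>n. outer (phi n)"
  define y where "y j = trans_mat ?A s (j - s) *v x" for j
  define a where "a j = phi j \<bullet> y j" for j
  have ys: "y (Suc j) = y j - a j *\<^sub>R phi j" if "s \<le> j" for j
  proof -
    have "Suc j - s = Suc (j - s)" "s + (j - s) = j" using that by auto
    hence "y (Suc j) = (mat 1 - outer (phi j)) *v y j"
      by (simp add: y_def matrix_vector_mul_assoc)
    thus ?thesis by (simp add: matrix_vector_mult_diff_rdistrib outer_mv a_def)
  qed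
  have xrep: "x = y j + (\<Sum>l = s..<j. a l *\<^sub>R phi l)" if "s \<le> j" for j
    using that
  proof (induction j rule: dec_induct)
    case base
    then show ?case by (simp add: y_def)
  next
    case (step n)
    then show ?case by (simp add: ys)
  qed
  have nrm: "norm (y j)^2 \<le> norm x^2 - (\<Sum>l = s..<j. (a l)^2)" if "s \<le> j" for j
    using that
  proof (induction j rule: dec_induct)
    case base
    then show ?case by (simp add: y_def)
  next
    case (step n)
    have "norm (y (Suc n))^2 \<le> norm (y n)^2 - (a n)^2"
    proof -
      have "y (Suc n) = (mat 1 - outer (phi n)) *v y n"
        using ys[of n] step(1) by (simp add: matrix_vector_mult_diff_rdistrib outer_mv a_def)
      thus ?thesis using step_le[OF pn[of n], of "y n"] by (simp add: a_def)
    qed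
    then show ?case using step by simp
  qed
  define D where "D = (\<Sum>l = s..<N. (a l)^2)"
  define I where "I = {s..<N}"
  define M where "M = Max (mu ` I)"
  define c where "c j = (\<Sum>l = s..<j. (phi j \<bullet> phi l) * a l)" for j
  define Bs where "Bs = (\<Sum>j = s..<N. mu j * (\<Sum>l = s..<j. (phi j \<bullet> phi l)^2))"
  define den where "den = sqrt M + sqrt Bs"
  have phix: "phi j \<bullet> x = a j + c j" if "s \<le> j" for j
    using xrep[OF that] by (simp add: inner_add_right inner_sum_right c_def a_def algebra_simps)
  have D0: "D \<ge> 0" unfolding D_def by (simp add: sum_nonneg)
  have M: "mu j \<le> M" if "j \<in> I" for j unfolding M_def using that sN I_def by (intro Max_ge) auto
  have Bs0: "Bs \<ge> 0" unfolding Bs_def using mu by (intro sum_nonneg mult_nonneg_nonneg) auto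
  have M0: "M \<ge> 0" using M[of s] mu[of s] sN I_def by force
  define q where "q = x \<bullet> ((\<Sum>j = s..<N. mu j *\<^sub>R outer (phi j)) *v x)"
  have qe: "q = (\<Sum>j\<in>I. mu j * (a j + c j)^2)"
    unfolding q_def quad_form I_def by (intro sum.cong) (auto simp: phix power2_eq_square)
  have q0: "q \<ge> 0" unfolding qe using mu by (intro sum_nonneg) auto
  define u where "u j = sqrt (mu j) * a j" for j
  define v where "v j = sqrt (mu j) * c j" for j
  have "sqrt q = L2_set (\<lambda>j. u j + v j) I"
    unfolding qe L2_set_def u_def v_def
    by (intro arg_cong[where f=sqrt] sum.cong) (auto simp: power_mult_distrib mu distrib_left[symmetric])
  also have "\<dots> \<le> L2_set u I + L2_set v I" by (rule L2_set_triangle_ineq)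
  also have "L2_set u I \<le> sqrt M * sqrt D"
  proof -
    have "(\<Sum>j\<in>I. (u j)^2) \<le> (\<Sum>j\<in>I. M * (a j)^2)"
      unfolding u_def by (intro sum_mono) (auto simp: power_mult_distrib mu M intro: mult_right_mono)
    also have "\<dots> = M * D" by (simp add: D_def I_def sum_distrib_left)
    finally show ?thesis unfolding L2_set_def by (simp add: real_sqrt_mult[symmetric])
  qed
  also have "L2_set v I \<le> sqrt Bs * sqrt D"
  proof -
    have "(v j)^2 \<le> mu j * (\<Sum>l = s..<j. (phi j \<bullet> phi l)^2) * D" if "j \<in> I" for j
    proof -
      have "(c j)^2 \<le> (\<Sum>l = s..<j. (phi j \<bullet> phi l)^2) * (\<Sum>l = s..<j. (a l)^2)"
        unfolding c_def by (rule Cauchy_Schwarz_ineq_sum)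
      also have "\<dots> \<le> (\<Sum>l = s..<j. (phi j \<bullet> phi l)^2) * D"
        unfolding D_def using that I_def by (intro mult_left_mono sum_mono2 sum_nonneg) auto
      finally have "(c j)^2 \<le> (\<Sum>l = s..<j. (phi j \<bullet> phi l)^2) * D" .
      thus ?thesis unfolding v_def using mu[of j]
        by (simp add: power_mult_distrib mult.assoc mult_left_mono)
    qed
    hence "(\<Sum>j\<in>I. (v j)^2) \<le> (\<Sum>j\<in>I. mu j * (\<Sum>l = s..<j. (phi j \<bullet> phi l)^2) * D)"
      by (rule sum_mono)
    also have "\<dots> = Bs * D" by (simp add: Bs_def I_def sum_distrib_right)
    finally show ?thesis unfolding L2_set_def by (simp add: real_sqrt_mult[symmetric])
  qed
  finally have "sqrt q \<le> den * sqrt D" unfolding den_def by (simp add: algebra_simps)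
  hence "(sqrt q)^2 \<le> (den * sqrt D)^2" using q0 by (intro power_mono) auto
  hence "q \<le> den^2 * D" using q0 D0 by (simp add: power_mult_distrib)
  also have "D \<le> norm x ^ 2 - norm (y N) ^ 2" using nrm[of N] sN D_def by simp
  hence "den^2 * D \<le> den^2 * (norm x ^ 2 - norm (y N) ^ 2)" by (intro mult_left_mono) auto
  finally show ?thesis unfolding q_def den_def M_def Bs_def I_def y_def .
qed

theorem mainTheorem2:
  fixes phi :: "nat \<Rightarrow> real^'m" and mu :: "nat \<Rightarrow> real" and t :: "nat \<Rightarrow> nat"
  assumes A_bounds: "\<And>n. loewner_le 0 (outer (phi n)) \<and> loewner_le (outer (phi n)) (mat 1)"
    and mu_nonneg: "\<And>j. mu j \<ge> 0"
    and t_mono: "strict_mono t"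
    and denom_nz: "\<And>k. k \<ge> 1 \<Longrightarrow>
      (sqrt (Max (mu ` {t (k-1)..<t k}))
       + sqrt (\<Sum>j = t (k-1)..<t k. mu j * (\<Sum>l = t (k-1)..<j. (phi j \<bullet> phi l)^2)))^2 \<noteq> 0"
    and diverge: "filterlim (\<lambda>K. \<Sum>k = 1..K.
        lambda_min (\<Sum>j = t (k-1)..<t k. mu j *\<^sub>R outer (phi j)) /
        (sqrt (Max (mu ` {t (k-1)..<t k}))
         + sqrt (\<Sum>j = t (k-1)..<t k. mu j * (\<Sum>l = t (k-1)..<j. (phi j \<bullet> phi l)^2)))^2)
        at_top sequentially"
  shows "(\<lambda>n. Phi (\<lambda>n. outer (phi n)) n 0) \<longlonglongrightarrow> 0"
proof -
  let ?A = "\<lambda>n. outer (phi n)"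
  have pn: "\<And>n. phi n \<bullet> phi n \<le> 1" using A_bounds norm_phi_le by blast
  define den where "den k = (sqrt (Max (mu ` {t (k-1)..<t k}))
       + sqrt (\<Sum>j = t (k-1)..<t k. mu j * (\<Sum>l = t (k-1)..<j. (phi j \<bullet> phi l)^2)))^2" for k
  define S where "S k = (\<Sum>j = t (k-1)..<t k. mu j *\<^sub>R outer (phi j))" for k
  define c where "c k = lambda_min (S k) / den k" for k
  have den0: "den k > 0" if "k \<ge> 1" for k
  proof -
    have "den k \<noteq> 0" using denom_nz[OF that] unfolding den_def .
    moreover have "den k \<ge> 0" unfolding den_def by (rule zero_le_power2)
    ultimately show ?thesis by linarith
  qed
  have blk: "norm (trans_mat ?A (t (k-1)) (t k - t (k-1)) *v x)^2 \<le> (1 - c k) * norm x ^ 2"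
    if k: "k \<ge> 1" for k x
  proof -
    have lt: "t (k-1) < t k" using k by (intro strict_monoD[OF t_mono]) simp
    have sym: "\<And>x y. x \<bullet> (S k *v y) = y \<bullet> (S k *v x)"
      unfolding S_def by (simp add: quad_form mult_ac)
    have "lambda_min (S k) * (x \<bullet> x) \<le> x \<bullet> (S k *v x)" by (rule rayleigh[OF sym])
    also have "\<dots> \<le> den k * (norm x ^ 2 - norm (trans_mat ?A (t (k-1)) (t k - t (k-1)) *v x)^2)"
      unfolding S_def den_def by (rule block[OF pn mu_nonneg lt])
    finally have "lambda_min (S k) * (x \<bullet> x) / den k \<le> norm x ^ 2 - norm (trans_mat ?A (t (k-1)) (t k - t (k-1)) *v x)^2"
      using den0[OF k] by (simp add: field_simps)
    thus ?thesis unfolding c_def by (simp add: algebra_simps power2_norm_eq_inner)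
  qed
  have Phi_eq: "Phi ?A n 0 = trans_mat ?A 0 n" for n by (simp add: Phi_def)
  have vec: "(\<lambda>n. trans_mat ?A 0 n *v x) \<longlonglongrightarrow> 0" for x
  proof -
    define f where "f n = norm (trans_mat ?A 0 n *v x)^2" for n
    have fdec: "decseq f"
    proof (rule decseq_SucI)
      fix n
      have "trans_mat ?A 0 (Suc n) *v x = (mat 1 - outer (phi n)) *v (trans_mat ?A 0 n *v x)"
        by (simp add: matrix_vector_mul_assoc)
      thus "f (Suc n) \<le> f n" unfolding f_def using step_le[OF pn[of n], of "trans_mat ?A 0 n *v x"]
        by (smt (verit) zero_le_power2)
    qed
    have gk: "f (t k) \<le> exp (- c k) * f (t (k-1))" if k: "k \<ge> 1" for k
    proof -
      have "t (k-1) < t k" using k by (intro strict_monoD[OF t_mono]) simp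
      hence "trans_mat ?A 0 (t k) = trans_mat ?A (t (k-1)) (t k - t (k-1)) ** trans_mat ?A 0 (t (k-1))"
        using trans_mat_add[of ?A 0 "t (k-1)" "t k - t (k-1)"] by simp
      hence "f (t k) \<le> (1 - c k) * f (t (k-1))"
        unfolding f_def using blk[OF k, of "trans_mat ?A 0 (t (k-1)) *v x"]
        by (simp add: matrix_vector_mul_assoc)
      also have "\<dots> \<le> exp (- c k) * f (t (k-1))"
        using exp_ge_add_one_self[of "- c k"] unfolding f_def by (intro mult_right_mono) auto
      finally show ?thesis .
    qed
    have gK: "f (t K) \<le> exp (- (\<Sum>k = 1..K. c k)) * f (t 0)" for K
    proof (induction K)
      case 0
      then show ?case by simp
    next
      case (Suc K)
      have "f (t (Suc K)) \<le> exp (- c (Suc K)) * f (t K)" using gk[of "Suc K"] by simp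
      also have "\<dots> \<le> exp (- c (Suc K)) * (exp (- (\<Sum>k = 1..K. c k)) * f (t 0))"
        using Suc by (intro mult_left_mono) auto
      also have "\<dots> = exp (- (\<Sum>k = 1..Suc K. c k)) * f (t 0)"
        by (simp add: exp_add[symmetric] exp_minus_inverse algebra_simps)
      finally show ?case .
    qed
    have div: "filterlim (\<lambda>K. \<Sum>k = 1..K. c k) at_top sequentially"
      using diverge unfolding c_def S_def den_def .
    have "(\<lambda>K. exp (- (\<Sum>k = 1..K. c k))) \<longlonglongrightarrow> 0"
    proof -
      have "filterlim (\<lambda>K. - (\<Sum>k = 1..K. c k)) at_bot sequentially"
        using div by (simp add: filterlim_uminus_at_bot)
      thus ?thesis by (rule filterlim_compose[OF exp_at_bot])
    qed
    hence h: "(\<lambda>K. exp (- (\<Sum>k = 1..K. c k)) * f (t 0)) \<longlonglongrightarrow> 0"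
      by (rule tendsto_mult_left_zero)
    have ev1: "\<forall>\<^sub>F n in sequentially. 0 \<le> (f \<circ> t) n" by (simp add: f_def)
    have ev2: "\<forall>\<^sub>F n in sequentially. (f \<circ> t) n \<le> exp (- (\<Sum>k = 1..n. c k)) * f (t 0)"
      using gK by simp
    have ft: "(f \<circ> t) \<longlonglongrightarrow> 0"
      by (rule tendsto_sandwich[OF ev1 ev2 tendsto_const h])
    obtain L where L: "f \<longlonglongrightarrow> L" using decseq_convergent[OF fdec, of 0] unfolding f_def by auto
    have "(f \<circ> t) \<longlonglongrightarrow> L" by (rule LIMSEQ_subseq_LIMSEQ[OF L t_mono])
    hence "L = 0" using ft LIMSEQ_unique by blast
    hence "(\<lambda>n. sqrt (f n)) \<longlonglongrightarrow> 0" using L tendsto_real_sqrt by fastforce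
    hence "(\<lambda>n. norm (trans_mat ?A 0 n *v x)) \<longlonglongrightarrow> 0" by (simp add: f_def)
    thus ?thesis by (simp add: tendsto_norm_zero_iff)
  qed
  show ?thesis unfolding Phi_eq
  proof (rule vec_tendstoI, rule vec_tendstoI)
    fix i j
    have "(\<lambda>n. (trans_mat ?A 0 n *v axis j 1) $ i) \<longlonglongrightarrow> (0::real^'m) $ i"
      by (rule tendsto_vec_nth[OF vec])
    thus "(\<lambda>n. trans_mat ?A 0 n $ i $ j) \<longlonglongrightarrow> 0 $ i $ j"
      by (simp add: matrix_vector_mult_basis column_def)
  qed
qed

end
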